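(* Let $f_{SG}(x)=\sqrt{\frac{x^2+1}{2}}-\sqrt x$ for $x\in(0,\infty)$, let $f_{SG}^*(u)=u\,f_{SG}\!\left(\frac{1-u}{u}\right)$ for $u\in(0,1)$, extended by continuity to $[0,1]$ (explicitly $f_{SG}^*(u)=\frac{\sqrt2}{2}\sqrt{u^2+(1-u)^2}-\sqrt{u(1-u)}$), and define $\overline M_{SG}(C_1,C_2)=E_X\{f_{SG}^*(P(C_2\mid x))\}$. Then $$P_e\le \frac12\left[1-\frac{2}{\sqrt2}\,\overline M_{SG}(C_1,C_2)\right].$$
   Context: Two-class decision problem: classes $C_1,C_2$, an observation $x$ in a space $\mathrm X$ with density $p(x)$, and a posteriori probabilities $P(C_1\mid x),P(C_2\mid x)\ge0$ with $P(C_1\mid x)+P(C_2\mid x)=1$. $E_X\{g(x)\}=\int_{\mathrm X} g(x)p(x)\,dx$. $P_e=E_X\{\min(P(C_1\mid x),P(C_2\mid x))\}$ is the Bayesian probability of error. *)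

theory Defs
  imports "HOL-Analysis.Analysis"
begin

text \<open>The observation space is Euclidean; the observation has a density p with
  respect to Lebesgue measure, and the expectation is the Lebesgue integral of g times p.\<close>

definition E_X :: "('a::euclidean_space \<Rightarrow> real) \<Rightarrow> ('a \<Rightarrow> real) \<Rightarrow> real" where
  "E_X p g = (\<integral>x. g x * p x \<partial>lborel)"

definition f_SG :: "real \<Rightarrow> real" where
  "f_SG x = sqrt ((x^2 + 1) / 2) - sqrt x"

text \<open>Perspective-type transform, on (0,1) by definition, at the endpoints by its
  continuous extension (explicit formula).\<close>
definition f_SG_star :: "real \<Rightarrow> real" where
  "f_SG_star u = (if 0 < u \<and> u < 1 then u * f_SG ((1 - u) / u)
     else sqrt 2 / 2 * sqrt (u^2 + (1 - u)^2) - sqrt (u * (1 - u)))"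

definition P_e :: "('a::euclidean_space \<Rightarrow> real) \<Rightarrow> ('a \<Rightarrow> real) \<Rightarrow> ('a \<Rightarrow> real) \<Rightarrow> real" where
  "P_e p P1 P2 = E_X p (\<lambda>x. min (P1 x) (P2 x))"

definition M_SG :: "('a::euclidean_space \<Rightarrow> real) \<Rightarrow> ('a \<Rightarrow> real) \<Rightarrow> ('a \<Rightarrow> real) \<Rightarrow> real" where
  "M_SG p P1 P2 = E_X p (\<lambda>x. f_SG_star (P2 x))"

end

theory Submission
  imports Defs
begin

lemma fstar_explicit:
  assumes "0 \<le> u" "u \<le> 1"
  shows "f_SG_star u = sqrt 2 / 2 * sqrt (u^2 + (1 - u)^2) - sqrt (u * (1 - u))"
proof (cases "0 < u \<and> u < 1")
  case True
  have u: "u > 0" using True by auto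
  have 1: "((1-u)/u)^2 + 1 = (u^2 + (1-u)^2) / u^2" using u by (simp add: field_simps power2_eq_square)
  have 2: "u * sqrt ((u^2 + (1-u)^2) / u^2 / 2) = sqrt 2 / 2 * sqrt (u^2 + (1-u)^2)"
  proof -
    have "u * sqrt ((u^2 + (1-u)^2) / u^2 / 2) = u * (sqrt (u^2 + (1-u)^2) / (u * sqrt 2))"
      using u by (simp add: real_sqrt_divide real_sqrt_mult)
    also have "\<dots> = sqrt (u^2 + (1-u)^2) / sqrt 2" using u by simp
    also have "\<dots> = sqrt 2 / 2 * sqrt (u^2 + (1-u)^2)"
      by (simp add: field_simps)
    finally show ?thesis .
  qed
  have 3: "u * sqrt ((1-u)/u) = sqrt (u * (1-u))"
  proof -
    have "u = sqrt (u*u)" using u by simp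
    then have "u * sqrt ((1-u)/u) = sqrt (u*u*((1-u)/u))" by (metis real_sqrt_mult)
    also have "u*u*((1-u)/u) = u*(1-u)" using u by (simp add: field_simps)
    finally show ?thesis .
  qed
  have "f_SG_star u = u * sqrt ((((1-u)/u)^2 + 1) / 2) - u * sqrt ((1-u)/u)"
    using True unfolding f_SG_star_def f_SG_def by (simp add: right_diff_distrib)
  also have "\<dots> = u * sqrt ((u^2 + (1-u)^2) / u^2 / 2) - u * sqrt ((1-u)/u)"
    by (simp only: 1)
  finally show ?thesis by (simp only: 2 3)
next
  case False
  then show ?thesis unfolding f_SG_star_def by auto
qed

lemma key:
  fixes a b :: real
  assumes "0 \<le> a" "a \<le> b"
  shows "sqrt (a^2 + b^2) \<le> (b - a) + sqrt 2 * sqrt (a*b)"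
proof -
  have c: "sqrt 2 * sqrt (a*b) \<ge> 0" using assms by simp
  have cs: "(sqrt 2 * sqrt (a*b))^2 = 2*a*b" using assms by (simp add: power_mult_distrib)
  have "a^2 + b^2 \<le> ((b - a) + sqrt 2 * sqrt (a*b))^2"
    using assms c cs by (simp add: power2_sum power2_diff)
  then show ?thesis using assms c
    by (metis add_nonneg_nonneg diff_ge_0_iff_ge real_le_lsqrt real_sqrt_le_mono real_sqrt_pow2 sum_power2_ge_zero)
qed

lemma pointwise:
  fixes u :: real
  assumes "0 \<le> u" "u \<le> 1"
  shows "min (1 - u) u \<le> 1/2 - 1/2 * sqrt (u^2 + (1-u)^2) + sqrt 2 / 2 * sqrt (u*(1-u))"
proof (cases "u \<le> 1 - u")
  case True
  have "sqrt (u^2 + (1-u)^2) \<le> ((1-u) - u) + sqrt 2 * sqrt (u*(1-u))"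
    using key[of u "1-u"] True assms by simp
  then show ?thesis using True by simp
next
  case False
  have "sqrt ((1-u)^2 + u^2) \<le> (u - (1-u)) + sqrt 2 * sqrt ((1-u)*u)"
    using key[of "1-u" u] False assms by simp
  then show ?thesis using False by (simp add: add.commute mult.commute)
qed

theorem mainTheorem5:
  fixes p P1 P2 :: "'a::euclidean_space \<Rightarrow> real"
  assumes p_meas: "p \<in> borel_measurable lborel"
    and p_nonneg: "\<And>x. p x \<ge> 0"
    and p_int: "integrable lborel p"
    and p_total: "(\<integral>x. p x \<partial>lborel) = 1"
    and P1_meas: "P1 \<in> borel_measurable lborel"
    and P2_meas: "P2 \<in> borel_measurable lborel"
    and P1_nonneg: "\<And>x. P1 x \<ge> 0"
    and P2_nonneg: "\<And>x. P2 x \<ge> 0"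
    and P_sum: "\<And>x. P1 x + P2 x = 1"
  shows "P_e p P1 P2 \<le> 1/2 * (1 - 2 / sqrt 2 * M_SG p P1 P2)"
proof -
  define g where "g u = sqrt 2 / 2 * sqrt (u^2 + (1 - u)^2) - sqrt (u * (1 - u))" for u :: real
  have P2le: "P2 x \<le> 1" for x using P_sum[of x] P1_nonneg[of x] by linarith
  have P1eq: "P1 x = 1 - P2 x" for x using P_sum[of x] by linarith
  have fs: "f_SG_star (P2 x) = g (P2 x)" for x
    using fstar_explicit[OF P2_nonneg P2le] g_def by simp
  have gm: "(\<lambda>x. g (P2 x)) \<in> borel_measurable lborel"
    unfolding g_def using P2_meas by measurable
  have gb: "\<bar>g (P2 x)\<bar> \<le> 2" for x
  proof -
    have u: "0 \<le> P2 x" "P2 x \<le> 1" using P2_nonneg P2le by auto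
    have s1: "sqrt (P2 x ^2 + (1 - P2 x)^2) \<le> 1"
    proof -
      have "P2 x ^2 + (1 - P2 x)^2 = 1 - 2 * (P2 x * (1 - P2 x))" by (simp add: power2_eq_square algebra_simps)
      moreover have "P2 x * (1 - P2 x) \<ge> 0" using u by simp
      ultimately show ?thesis by simp
    qed
    have s2: "sqrt (P2 x * (1 - P2 x)) \<le> 1" using u
      by (simp add: mult_le_one)
    have s3: "sqrt 2 \<le> 2" by (smt (verit) real_sqrt_le_iff real_sqrt_four)
    have a: "sqrt 2 / 2 * sqrt (P2 x ^2 + (1 - P2 x)^2) \<le> 1"
    proof -
      have "sqrt 2 / 2 * sqrt (P2 x ^2 + (1 - P2 x)^2) \<le> sqrt 2 / 2 * 1"
        by (rule mult_left_mono[OF s1]) simp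
      then show ?thesis using s3 by linarith
    qed
    have b: "0 \<le> sqrt 2 / 2 * sqrt (P2 x ^2 + (1 - P2 x)^2)" by simp
    have c: "0 \<le> sqrt (P2 x * (1 - P2 x))" using u by simp
    show ?thesis unfolding g_def using a b c s2 by linarith
  qed
  have int1: "integrable lborel (\<lambda>x. g (P2 x) * p x)"
  proof (rule Bochner_Integration.integrable_bound)
    show "integrable lborel (\<lambda>x. 2 * p x)" using p_int by simp
    show "(\<lambda>x. g (P2 x) * p x) \<in> borel_measurable lborel" using gm p_meas by simp
    show "AE x in lborel. norm (g (P2 x) * p x) \<le> norm (2 * p x)"
      using gb p_nonneg by (auto simp: abs_mult intro!: mult_right_mono)
  qed
  have int2: "integrable lborel (\<lambda>x. min (P1 x) (P2 x) * p x)"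
  proof (rule Bochner_Integration.integrable_bound)
    show "integrable lborel p" using p_int by simp
    show "(\<lambda>x. min (P1 x) (P2 x) * p x) \<in> borel_measurable lborel" using P1_meas P2_meas p_meas by simp
    show "AE x in lborel. norm (min (P1 x) (P2 x) * p x) \<le> norm (p x)"
    proof (rule AE_I2)
      fix x
      have "min (P1 x) (P2 x) \<le> 1" using P2le[of x] by simp
      then have "min (P1 x) (P2 x) * p x \<le> p x"
        using mult_left_le_one_le[OF p_nonneg[of x], of "min (P1 x) (P2 x)"] P1_nonneg[of x] P2_nonneg[of x] by (simp add: mult.commute)
      then show "norm (min (P1 x) (P2 x) * p x) \<le> norm (p x)"
        using P1_nonneg[of x] P2_nonneg[of x] p_nonneg[of x] by simp
    qed
  qed
  have s2: "2 / sqrt 2 = sqrt 2" by (metis real_div_sqrt zero_le_numeral)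
  have "P_e p P1 P2 \<le> (\<integral>x. (1/2 * p x - sqrt 2 / 2 * (g (P2 x) * p x)) \<partial>lborel)"
    unfolding P_e_def E_X_def
  proof (rule integral_mono[OF int2])
    show "integrable lborel (\<lambda>x. 1/2 * p x - sqrt 2 / 2 * (g (P2 x) * p x))"
      using int1 p_int by auto
    fix x
    have "min (P1 x) (P2 x) \<le> 1/2 - sqrt 2 / 2 * g (P2 x)"
      using pointwise[OF P2_nonneg P2le, of x] unfolding P1eq g_def
      by (simp add: right_diff_distrib mult.assoc[symmetric])
    from mult_right_mono[OF this p_nonneg[of x]]
    show "min (P1 x) (P2 x) * p x \<le> 1/2 * p x - sqrt 2 / 2 * (g (P2 x) * p x)"
      by (simp add: algebra_simps)
  qed
  also have "\<dots> = 1/2 - sqrt 2 / 2 * (\<integral>x. g (P2 x) * p x \<partial>lborel)"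
    using int1 p_int p_total by simp
  also have "\<dots> = 1/2 * (1 - 2 / sqrt 2 * M_SG p P1 P2)"
    unfolding M_SG_def E_X_def fs s2 by (simp add: algebra_simps)
  finally show ?thesis .
qed

end
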